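(* Fix $K\in\mathbb N$, a realization of the random basis functions, and $i\in\mathbb N$. Then $\hat\theta^i_{K,m}\to\theta^i_K$ $\mathbb Q$-almost surely as $m\to\infty$.
   Context: Let $d,N\ge1$, let $X=(X_0,\dots,X_N)$ be a discrete-time Markov process with values in $\mathbb R^d$, $\mathbb Q$ the pricing measure, $\mathbb E$ expectation under $\mathbb Q$, $g:\mathbb R^d\to[0,\infty)$ a measurable payoff and $\alpha\in(0,1)$ the discount factor. Random basis functions: $\alpha_k\in\mathbb R^{d+1},\beta_k\in\mathbb R$ with i.i.d. standard Gaussian entries, $\phi_k(x,n):=\sigma(\alpha_k^\top(x,n)^\top+\beta_k)$ with $\sigma$ a bounded activation function, $\phi_{1:K}:=(\phi_1,\dots,\phi_K)$ (a row vector), and $(\Phi_{K,n}\theta)(x):=\sum_{k=1}^K\theta_k\phi_k(x,n)$ for $\theta\in\mathbb R^K$; by convention the term $\max(g(X_N),(\Phi_{K,N}\theta)(X_N))$ is read as $g(X_N)$. Assume the matrix $\mathbb E\big[\sum_{n=0}^{N-1}\phi_{1:K}^\top(X_n,n)\phi_{1:K}(X_n,n)\big]$ is invertible. Given $\theta_K^0\in\mathbb R^K$, define $\theta_K^{i+1}:=\alpha\Big(\mathbb E\big[\sum_{n=0}^{N-1}\phi_{1:K}^\top(X_n,n)\phi_{1:K}(X_n,n)\big]\Big)^{-1}\mathbb E\Big[\sum_{n=0}^{N-1}\phi_{1:K}^\top(X_n,n)\max\big(g(X_{n+1}),(\Phi_{K,n+1}\theta_K^i)(X_{n+1})\big)\Big].$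 Let $(x_0^j,\dots,x_N^j)$, $j=1,\dots,m$, be i.i.d. samples of $X$ under $\mathbb Q$, fixed for all iterations, set $\hat\theta^0_{K,m}:=\theta_K^0$ and $\hat\theta^{i+1}_{K,m}:=\alpha\Big(\sum_{j=1}^m\sum_{n=0}^{N-1}\phi_{1:K}^\top(x_n^j,n)\phi_{1:K}(x_n^j,n)\Big)^{-1}\sum_{j=1}^m\sum_{n=0}^{N-1}\phi_{1:K}^\top(x_n^j,n)\max\big(g(x_{n+1}^j),(\Phi_{K,n+1}\hat\theta^i_{K,m})(x_{n+1}^j)\big).$ *)

theory Defs
  imports "HOL-Probability.Probability"
begin

text \<open>Random basis function phi_k(x,n) = sigma(alpha_k^T (x,n) + beta_k), for a fixed
  realization alpha_k = (a k, c k) in R^d x R = R^(d+1) and beta_k = b k.\<close>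
definition rbf :: "(real \<Rightarrow> real) \<Rightarrow> ('k \<Rightarrow> real^'d) \<Rightarrow> ('k \<Rightarrow> real) \<Rightarrow> ('k \<Rightarrow> real)
    \<Rightarrow> 'k \<Rightarrow> real^'d \<Rightarrow> nat \<Rightarrow> real" where
  "rbf \<sigma> a c b k x n = \<sigma> (a k \<bullet> x + c k * real n + b k)"

definition Phi :: "('k::finite \<Rightarrow> 'x \<Rightarrow> nat \<Rightarrow> real) \<Rightarrow> real^'k \<Rightarrow> nat \<Rightarrow> 'x \<Rightarrow> real" where
  "Phi \<phi> \<theta> n x = (\<Sum>k\<in>UNIV. \<theta> $ k * \<phi> k x n)"

definition contval :: "nat \<Rightarrow> ('x \<Rightarrow> real) \<Rightarrow> ('k::finite \<Rightarrow> 'x \<Rightarrow> nat \<Rightarrow> real)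
    \<Rightarrow> real^'k \<Rightarrow> nat \<Rightarrow> 'x \<Rightarrow> real" where
  "contval N g \<phi> \<theta> n x = (if n = N then g x else max (g x) (Phi \<phi> \<theta> n x))"

definition gram :: "'w measure \<Rightarrow> ('w \<Rightarrow> nat \<Rightarrow> 'x) \<Rightarrow> nat \<Rightarrow> ('k::finite \<Rightarrow> 'x \<Rightarrow> nat \<Rightarrow> real)
    \<Rightarrow> real^'k^'k" where
  "gram M X N \<phi> = (\<chi> i j. \<integral>\<omega>. (\<Sum>n<N. \<phi> i (X \<omega> n) n * \<phi> j (X \<omega> n) n) \<partial>M)"

definition target :: "'w measure \<Rightarrow> ('w \<Rightarrow> nat \<Rightarrow> 'x) \<Rightarrow> nat \<Rightarrow> ('x \<Rightarrow> real)
    \<Rightarrow> ('k::finite \<Rightarrow> 'x \<Rightarrow> nat \<Rightarrow> real) \<Rightarrow> real^'k \<Rightarrow> real^'k" where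
  "target M X N g \<phi> \<theta> = (\<chi> i. \<integral>\<omega>. (\<Sum>n<N. \<phi> i (X \<omega> n) n *
       contval N g \<phi> \<theta> (Suc n) (X \<omega> (Suc n))) \<partial>M)"

primrec theta :: "'w measure \<Rightarrow> ('w \<Rightarrow> nat \<Rightarrow> 'x) \<Rightarrow> nat \<Rightarrow> ('x \<Rightarrow> real)
    \<Rightarrow> ('k::finite \<Rightarrow> 'x \<Rightarrow> nat \<Rightarrow> real) \<Rightarrow> real \<Rightarrow> real^'k \<Rightarrow> nat \<Rightarrow> real^'k" where
  "theta M X N g \<phi> \<alpha> \<theta>0 0 = \<theta>0"
| "theta M X N g \<phi> \<alpha> \<theta>0 (Suc i) =
     \<alpha> *\<^sub>R (matrix_inv (gram M X N \<phi>) *v target M X N g \<phi> (theta M X N g \<phi> \<alpha> \<theta>0 i))"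

text \<open>Empirical versions, built from sample paths xs 0, ..., xs (m-1) (i.e. j = 1..m).\<close>
definition emp_gram :: "(nat \<Rightarrow> nat \<Rightarrow> 'x) \<Rightarrow> nat \<Rightarrow> nat \<Rightarrow> ('k::finite \<Rightarrow> 'x \<Rightarrow> nat \<Rightarrow> real)
    \<Rightarrow> real^'k^'k" where
  "emp_gram xs m N \<phi> = (\<chi> i j. \<Sum>l<m. \<Sum>n<N. \<phi> i (xs l n) n * \<phi> j (xs l n) n)"

definition emp_target :: "(nat \<Rightarrow> nat \<Rightarrow> 'x) \<Rightarrow> nat \<Rightarrow> nat \<Rightarrow> ('x \<Rightarrow> real)
    \<Rightarrow> ('k::finite \<Rightarrow> 'x \<Rightarrow> nat \<Rightarrow> real) \<Rightarrow> real^'k \<Rightarrow> real^'k" where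
  "emp_target xs m N g \<phi> \<theta> = (\<chi> i. \<Sum>l<m. \<Sum>n<N. \<phi> i (xs l n) n *
       contval N g \<phi> \<theta> (Suc n) (xs l (Suc n)))"

primrec theta_hat :: "(nat \<Rightarrow> nat \<Rightarrow> 'x) \<Rightarrow> nat \<Rightarrow> nat \<Rightarrow> ('x \<Rightarrow> real)
    \<Rightarrow> ('k::finite \<Rightarrow> 'x \<Rightarrow> nat \<Rightarrow> real) \<Rightarrow> real \<Rightarrow> real^'k \<Rightarrow> nat \<Rightarrow> real^'k" where
  "theta_hat xs m N g \<phi> \<alpha> \<theta>0 0 = \<theta>0"
| "theta_hat xs m N g \<phi> \<alpha> \<theta>0 (Suc i) =
     \<alpha> *\<^sub>R (matrix_inv (emp_gram xs m N \<phi>) *v emp_target xs m N g \<phi> (theta_hat xs m N g \<phi> \<alpha> \<theta>0 i))"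

definition natural_filtration :: "'w measure \<Rightarrow> ('w \<Rightarrow> nat \<Rightarrow> 'x::topological_space) \<Rightarrow> nat \<Rightarrow> 'w measure" where
  "natural_filtration M X n = sigma (space M)
     (\<Union>k\<in>{..n}. {(\<lambda>\<omega>. X \<omega> k) -` B \<inter> space M | B. B \<in> sets borel})"

definition markov_process :: "'w measure \<Rightarrow> ('w \<Rightarrow> nat \<Rightarrow> 'x::topological_space) \<Rightarrow> nat \<Rightarrow> bool" where
  "markov_process M X N \<longleftrightarrow> (\<forall>n<N. \<forall>A\<in>sets (borel :: 'x measure).
     AE \<omega> in M. real_cond_exp M (natural_filtration M X n) (\<lambda>\<omega>. indicator A (X \<omega> (Suc n)) :: real) \<omega>
              = real_cond_exp M (vimage_algebra (space M) (\<lambda>\<omega>. X \<omega> n) borel)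
                   (\<lambda>\<omega>. indicator A (X \<omega> (Suc n)) :: real) \<omega>)"

end

theory Submission
  imports Defs "HOL-Probability.Probability"
begin


lemma (in prob_space) indep_sets_Suc:
  assumes "indep_sets F UNIV" shows "indep_sets (\<lambda>i. F (Suc i)) UNIV"
  unfolding indep_sets_def
proof (intro conjI ballI allI impI)
  fix i show "F (Suc i) \<subseteq> events" using assms by (auto simp: indep_sets_def)
next
  fix J :: "nat set" and A assume J: "J \<subseteq> UNIV" "J \<noteq> {}" "finite J" and A: "A \<in> Pi J (\<lambda>i. F (Suc i))"
  define B where "B = (\<lambda>k. A (k - 1))"
  have "B \<in> Pi (Suc ` J) F" using A by (auto simp: B_def)
  then have "prob (\<Inter>j\<in>Suc`J. B j) = (\<Prod>j\<in>Suc`J. prob (B j))"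
    using assms J unfolding indep_sets_def by (metis finite_imageI image_is_empty subset_UNIV)
  moreover have "(\<Inter>j\<in>Suc`J. B j) = (\<Inter>j\<in>J. A j)" by (auto simp: B_def)
  moreover have "(\<Prod>j\<in>Suc`J. prob (B j)) = (\<Prod>j\<in>J. prob (A j))"
    by (simp add: prod.reindex B_def)
  ultimately show "prob (\<Inter>j\<in>J. A j) = (\<Prod>j\<in>J. prob (A j))" by simp
qed

lemma (in prob_space) indep_vars_Suc:
  assumes "indep_vars M' X UNIV" shows "indep_vars (\<lambda>i. M' (Suc i)) (\<lambda>i. X (Suc i)) UNIV"
  using assms indep_sets_Suc unfolding indep_vars_def2 by auto

lemma (in prob_space) iid_shift_distr:
  fixes Y :: "nat \<Rightarrow> 'a \<Rightarrow> real"
  assumes ind: "indep_vars (\<lambda>_. borel) Y UNIV"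
   and idd: "\<And>j. distr M borel (Y j) = distr M borel (Y 0)" and n: "n > 0"
  shows "distr M (PiM {..<n} (\<lambda>_. borel)) (\<lambda>\<omega>. \<lambda>j\<in>{..<n}. Y (Suc j) \<omega>)
       = distr M (PiM {..<n} (\<lambda>_. borel)) (\<lambda>\<omega>. \<lambda>j\<in>{..<n}. Y j \<omega>)"
proof -
  have rv: "\<And>j. random_variable borel (Y j)" using ind unfolding indep_vars_def by auto
  have ind1: "indep_vars (\<lambda>_. borel) (\<lambda>j. Y (Suc j)) UNIV" using indep_vars_Suc[OF ind] by simp
  have ne: "{..<n} \<noteq> {}" using n by auto
  have "distr M (PiM {..<n} (\<lambda>_. borel)) (\<lambda>\<omega>. \<lambda>j\<in>{..<n}. Y (Suc j) \<omega>)
      = (PiM {..<n} (\<lambda>j. distr M borel (Y (Suc j))))"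
    using indep_vars_iff_distr_eq_PiM[OF ne, where M'="\<lambda>_. borel" and X="\<lambda>j. Y (Suc j)"] rv
      indep_vars_subset[OF ind1, of "{..<n}"] by auto
  also have "\<dots> = PiM {..<n} (\<lambda>j. distr M borel (Y j))"
    by (intro PiM_cong refl) (metis idd)
  also have "\<dots> = distr M (PiM {..<n} (\<lambda>_. borel)) (\<lambda>\<omega>. \<lambda>j\<in>{..<n}. Y j \<omega>)"
    using indep_vars_iff_distr_eq_PiM[OF ne, where M'="\<lambda>_. borel" and X=Y] rv
      indep_vars_subset[OF ind, of "{..<n}"] by auto
  finally show ?thesis .
qed

lemma garsia_pw:
  fixes y :: "nat \<Rightarrow> real"
  shows "Max ((\<lambda>k. \<Sum>j<k. y j) ` {..n}) - Max ((\<lambda>k. \<Sum>j<k. y (Suc j)) ` {..n})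
     \<le> (if Max ((\<lambda>k. \<Sum>j<k. y j) ` {..n}) > 0 then y 0 else 0)"
proof -
  let ?S = "\<lambda>k. \<Sum>j<k. y j" and ?T = "\<lambda>k. \<Sum>j<k. y (Suc j)"
  have "?T 0 \<le> Max (?T ` {..n})" by (rule Max_ge[OF _ imageI]) auto
  then have T0: "0 \<le> Max (?T ` {..n})" by simp
  have "?S 0 \<le> Max (?S ` {..n})" by (rule Max_ge[OF _ imageI]) auto
  then have S0: "0 \<le> Max (?S ` {..n})" by simp
  show ?thesis
  proof (cases "Max (?S ` {..n}) > 0")
    case True
    have "Max (?S ` {..n}) \<in> ?S ` {..n}" by (rule Max_in) auto
    then obtain k where k0: "Max (?S ` {..n}) = ?S k" "k \<in> {..n}" by (rule imageE)
    then have k: "k \<le> n" "Max (?S ` {..n}) = ?S k" by auto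
    have "k \<noteq> 0" proof assume "k = 0" then show False using True k by simp qed
    then obtain k' where k': "k = Suc k'" by (cases k) auto
    have "?S k = y 0 + ?T k'" unfolding k' by (subst sum.lessThan_Suc_shift) simp
    moreover have "?T k' \<le> Max (?T ` {..n})" using k k' by (intro Max_ge) auto
    ultimately have "Max (?S ` {..n}) - Max (?T ` {..n}) \<le> y 0" using k by linarith
    then show ?thesis using True by (simp only: if_True)
  next
    case False
    then have "Max (?S ` {..n}) - Max (?T ` {..n}) \<le> 0" using T0 S0 by linarith
    then show ?thesis using False by (simp only: if_False)
  qed
qed



locale iid_seq = prob_space +
  fixes Y :: "nat \<Rightarrow> 'a \<Rightarrow> real"
  assumes ind: "indep_vars (\<lambda>_. borel) Y UNIV"
    and idd: "\<And>j. distr M borel (Y j) = distr M borel (Y 0)"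
    and int0: "integrable M (Y 0)"
begin

lemma rv[measurable]: "Y j \<in> borel_measurable M"
  using ind unfolding indep_vars_def by auto

lemma intY: "integrable M (Y j)"
proof -
  have "integrable (distr M borel (Y 0)) (\<lambda>x. x)"
    using int0 by (subst integrable_distr_eq) auto
  then have "integrable (distr M borel (Y j)) (\<lambda>x. x)" by (simp add: idd[of j])
  then show ?thesis by (subst (asm) integrable_distr_eq) auto
qed

lemma expY: "expectation (Y j) = expectation (Y 0)"
proof -
  have "expectation (Y j) = integral\<^sup>L (distr M borel (Y j)) (\<lambda>x. x)"
    by (subst integral_distr) auto
  also have "\<dots> = integral\<^sup>L (distr M borel (Y 0)) (\<lambda>x. x)" by (simp add: idd[of j])
  also have "\<dots> = expectation (Y 0)" by (subst integral_distr) auto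
  finally show ?thesis .
qed

definition "Mx n \<omega> = Max ((\<lambda>k. \<Sum>j<k. Y j \<omega>) ` {..n})"
definition "Mx' n \<omega> = Max ((\<lambda>k. \<Sum>j<k. Y (Suc j) \<omega>) ` {..n})"

lemma Mx_meas[measurable]: "Mx n \<in> borel_measurable M" "Mx' n \<in> borel_measurable M"
  unfolding Mx_def Mx'_def by measurable

lemma Fmax_meas: "(\<lambda>h. Max ((\<lambda>k. \<Sum>j<k. h j) ` {..n::nat})) \<in> borel_measurable (PiM {..<n} (\<lambda>_. borel::real measure))"
proof (rule borel_measurable_Max)
  fix k assume k: "k \<in> {..n}"
  show "(\<lambda>h. \<Sum>j<k. h j) \<in> borel_measurable (PiM {..<n} (\<lambda>_. borel::real measure))"
    using k by (intro borel_measurable_sum measurable_component_singleton) auto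
qed simp

lemma Mx_eq_int: "integral\<^sup>L M (Mx' n) = integral\<^sup>L M (Mx n)"
proof (cases "n = 0")
  case True
  have "Mx 0 = (\<lambda>_. 0)" "Mx' 0 = (\<lambda>_. 0)" by (auto simp: Mx_def Mx'_def fun_eq_iff atMost_0)
  thus ?thesis using True by simp
next
  case False
  let ?F = "\<lambda>h. Max ((\<lambda>k. \<Sum>j<k. h j) ` {..n}) :: real"
  let ?P = "PiM {..<n} (\<lambda>_. borel::real measure)"
  have V: "(\<lambda>\<omega>. \<lambda>j\<in>{..<n}. Y j \<omega>) \<in> measurable M ?P" by measurable
  have V': "(\<lambda>\<omega>. \<lambda>j\<in>{..<n}. Y (Suc j) \<omega>) \<in> measurable M ?P" by measurable
  have e1: "Mx n = (\<lambda>\<omega>. ?F (\<lambda>j\<in>{..<n}. Y j \<omega>))"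
    unfolding Mx_def by (intro ext arg_cong[where f=Max] image_cong refl sum.cong) auto
  have e2: "Mx' n = (\<lambda>\<omega>. ?F (\<lambda>j\<in>{..<n}. Y (Suc j) \<omega>))"
    unfolding Mx'_def by (intro ext arg_cong[where f=Max] image_cong refl sum.cong) auto
  have "integral\<^sup>L M (Mx' n) = integral\<^sup>L (distr M ?P (\<lambda>\<omega>. \<lambda>j\<in>{..<n}. Y (Suc j) \<omega>)) ?F"
    unfolding e2 by (rule integral_distr[symmetric, OF V' Fmax_meas])
  also have "\<dots> = integral\<^sup>L (distr M ?P (\<lambda>\<omega>. \<lambda>j\<in>{..<n}. Y j \<omega>)) ?F"
    using iid_shift_distr[OF ind idd] False by simp
  also have "\<dots> = integral\<^sup>L M (Mx n)"
    unfolding e1 by (rule integral_distr[OF V Fmax_meas])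
  finally show ?thesis .
qed

lemma Mx_bound: "\<bar>Mx n \<omega>\<bar> \<le> (\<Sum>j<n. \<bar>Y j \<omega>\<bar>)" "\<bar>Mx' n \<omega>\<bar> \<le> (\<Sum>j<n. \<bar>Y (Suc j) \<omega>\<bar>)"
proof -
  have gen: "\<bar>Max ((\<lambda>k. \<Sum>j<k. y j) ` {..n})\<bar> \<le> (\<Sum>j<n. \<bar>y j\<bar>)" for y :: "nat \<Rightarrow> real"
  proof -
    have "(\<lambda>k. \<Sum>j<k. y j) 0 \<le> Max ((\<lambda>k. \<Sum>j<k. y j) ` {..n})" by (rule Max_ge[OF _ imageI]) auto
    then have ge: "0 \<le> Max ((\<lambda>k. \<Sum>j<k. y j) ` {..n})" by simp
    have "Max ((\<lambda>k. \<Sum>j<k. y j) ` {..n}) \<in> (\<lambda>k. \<Sum>j<k. y j) ` {..n}" by (rule Max_in) auto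
    then obtain k where k: "Max ((\<lambda>k. \<Sum>j<k. y j) ` {..n}) = (\<Sum>j<k. y j)" "k \<in> {..n}" by (rule imageE)
    have "(\<Sum>j<k. y j) \<le> (\<Sum>j<k. \<bar>y j\<bar>)" by (intro sum_mono) auto
    also have "\<dots> \<le> (\<Sum>j<n. \<bar>y j\<bar>)" using k(2) by (intro sum_mono2) auto
    finally show ?thesis using ge k(1) by linarith
  qed
  show "\<bar>Mx n \<omega>\<bar> \<le> (\<Sum>j<n. \<bar>Y j \<omega>\<bar>)" unfolding Mx_def by (rule gen)
  show "\<bar>Mx' n \<omega>\<bar> \<le> (\<Sum>j<n. \<bar>Y (Suc j) \<omega>\<bar>)" unfolding Mx'_def by (rule gen)
qed

lemma Mx_int: "integrable M (Mx n)" "integrable M (Mx' n)"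
proof -
  have i1: "integrable M (\<lambda>\<omega>. \<Sum>j<n. \<bar>Y j \<omega>\<bar>)" using intY by auto
  have i2: "integrable M (\<lambda>\<omega>. \<Sum>j<n. \<bar>Y (Suc j) \<omega>\<bar>)" using intY by auto
  show "integrable M (Mx n)"
    by (rule Bochner_Integration.integrable_bound[OF i1]) (auto intro!: AE_I2 order.trans[OF Mx_bound(1)])
  show "integrable M (Mx' n)"
    by (rule Bochner_Integration.integrable_bound[OF i2]) (auto intro!: AE_I2 order.trans[OF Mx_bound(2)])
qed

lemma garsia_int: "0 \<le> integral\<^sup>L M (\<lambda>\<omega>. if Mx n \<omega> > 0 then Y 0 \<omega> else 0)"
proof -
  have ii: "integrable M (\<lambda>\<omega>. if Mx n \<omega> > 0 then Y 0 \<omega> else 0)"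
    by (rule Bochner_Integration.integrable_bound[OF intY[of 0]]) auto
  have pw: "\<And>\<omega>. Mx n \<omega> - Mx' n \<omega> \<le> (if Mx n \<omega> > 0 then Y 0 \<omega> else 0)"
    unfolding Mx_def Mx'_def by (rule garsia_pw)
  have "0 = integral\<^sup>L M (\<lambda>\<omega>. Mx n \<omega> - Mx' n \<omega>)"
    using Mx_eq_int[of n] Mx_int[of n] by (simp add: Bochner_Integration.integral_diff)
  also have "\<dots> \<le> integral\<^sup>L M (\<lambda>\<omega>. if Mx n \<omega> > 0 then Y 0 \<omega> else 0)"
    using Mx_int ii pw by (intro integral_mono) auto
  finally show ?thesis .
qed

lemma neg_mean_escape:
  assumes neg: "expectation (Y 0) < 0"
  shows "prob {\<omega>\<in>space M. \<exists>k. 0 < (\<Sum>j<k. Y j \<omega>)} < 1"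
proof -
  let ?E = "{\<omega>\<in>space M. \<exists>k. 0 < (\<Sum>j<k. Y j \<omega>)}"
  have Ems[measurable]: "?E \<in> sets M" by measurable
  have pos: "Mx n \<omega> > 0 \<longleftrightarrow> (\<exists>k\<le>n. 0 < (\<Sum>j<k. Y j \<omega>))" for n \<omega>
    unfolding Mx_def by (subst Max_gr_iff) auto
  have lim: "(\<lambda>n. integral\<^sup>L M (\<lambda>\<omega>. if Mx n \<omega> > 0 then Y 0 \<omega> else 0))
      \<longlonglongrightarrow> integral\<^sup>L M (\<lambda>\<omega>. indicator ?E \<omega> * Y 0 \<omega>)"
  proof (rule integral_dominated_convergence[where w="\<lambda>\<omega>. \<bar>Y 0 \<omega>\<bar>"])
    show "AE \<omega> in M. (\<lambda>n. if Mx n \<omega> > 0 then Y 0 \<omega> else 0) \<longlonglongrightarrow> indicator ?E \<omega> * Y 0 \<omega>"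
    proof (rule AE_I2)
      fix \<omega> assume \<omega>: "\<omega> \<in> space M"
      show "(\<lambda>n. if Mx n \<omega> > 0 then Y 0 \<omega> else 0) \<longlonglongrightarrow> indicator ?E \<omega> * Y 0 \<omega>"
      proof (cases "\<exists>k. 0 < (\<Sum>j<k. Y j \<omega>)")
        case True
        then obtain k where k: "0 < (\<Sum>j<k. Y j \<omega>)" by auto
        have "eventually (\<lambda>n. (if Mx n \<omega> > 0 then Y 0 \<omega> else 0) = indicator ?E \<omega> * Y 0 \<omega>) sequentially"
          using eventually_ge_at_top[of k] by eventually_elim (use k \<omega> in \<open>auto simp: pos indicator_def\<close>)
        then show ?thesis by (rule tendsto_eventually)
      next
        case False
        then show ?thesis by (simp add: pos indicator_def)
      qed
    qed
  qed (use intY in \<open>auto\<close>)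
  then have ge0: "0 \<le> integral\<^sup>L M (\<lambda>\<omega>. indicator ?E \<omega> * Y 0 \<omega>)"
    by (rule LIMSEQ_le_const) (auto intro: garsia_int)
  show ?thesis
  proof (rule ccontr)
    assume "\<not> ?thesis"
    then have "prob ?E = 1" using prob_le_1[of ?E] by linarith
    then have "AE \<omega> in M. \<omega> \<in> ?E" by (intro AE_prob_1) auto
    then have "integral\<^sup>L M (\<lambda>\<omega>. indicator ?E \<omega> * Y 0 \<omega>) = expectation (Y 0)"
      by (intro integral_cong_AE) auto
    then show False using ge0 neg by simp
  qed
qed

end


lemma sum_split_shift: "(\<Sum>j<n+m. f j) = (\<Sum>j<n. f j) + (\<Sum>j<m. f (n+j)) " for f :: "nat \<Rightarrow> real"
  by (induction m) auto

lemma freq_shift: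
  fixes s t :: "nat \<Rightarrow> real"
  assumes eq: "\<And>k. k \<ge> n \<Longrightarrow> t k = s k + D"
    and fr: "\<exists>r::nat. \<forall>K. \<exists>k\<ge>K. s k > real k / real (Suc r)"
  shows "\<exists>r::nat. \<forall>K. \<exists>k\<ge>K. t k > real k / real (Suc r)"
proof -
  obtain r where r: "\<forall>K. \<exists>k\<ge>K. s k > real k / real (Suc r)" using fr by auto
  have "\<forall>K. \<exists>k\<ge>K. t k > real k / real (Suc (2*r+1))"
  proof
    fix K
    obtain k where k: "k \<ge> max (max K n) (nat \<lceil>2 * real (Suc r) * \<bar>D\<bar>\<rceil>)" "s k > real k / real (Suc r)"
      using r by blast
    have kD: "2 * real (Suc r) * \<bar>D\<bar> \<le> real k" using k(1) by linarith
    have pos: "0 < real (Suc r)" by simp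
    have "t k = s k + D" using k(1) eq by auto
    moreover have "\<bar>D\<bar> \<le> real k / (2 * real (Suc r))" using kD pos by (simp add: field_simps)
    moreover have "real (Suc (2*r+1)) = 2 * real (Suc r)" by simp
    then have "real k / real (Suc r) - real k / (2 * real (Suc r)) = real k / real (Suc (2*r+1))"
      using pos by (simp add: field_simps del: of_nat_Suc)
    ultimately have "t k > real k / real (Suc (2*r+1))" using k(2) by linarith
    then show "\<exists>k\<ge>K. t k > real k / real (Suc (2*r+1))" using k(1) by auto
  qed
  then show ?thesis by blast
qed

context iid_seq begin

lemma iid_affine: "iid_seq M (\<lambda>j \<omega>. a * Y j \<omega> + b)"
proof
  show "indep_vars (\<lambda>_. borel) (\<lambda>j \<omega>. a * Y j \<omega> + b) UNIV"
    by (rule indep_vars_compose2[OF ind, where Y="\<lambda>_ x. a * x + b"]) auto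
  fix j
  have "distr M borel (\<lambda>\<omega>. a * Y j \<omega> + b) = distr (distr M borel (Y j)) borel (\<lambda>x. a * x + b)"
    by (subst distr_distr) (auto simp: comp_def)
  also have "\<dots> = distr (distr M borel (Y 0)) borel (\<lambda>x. a * x + b)" by (simp add: idd[of j])
  also have "\<dots> = distr M borel (\<lambda>\<omega>. a * Y 0 \<omega> + b)"
    by (subst distr_distr) (auto simp: comp_def)
  finally show "distr M borel (\<lambda>\<omega>. a * Y j \<omega> + b) = distr M borel (\<lambda>\<omega>. a * Y 0 \<omega> + b)" .
  show "integrable M (\<lambda>\<omega>. a * Y 0 \<omega> + b)" using int0 by auto
qed

lemma tail_zero:
  assumes neg: "expectation (Y 0) < 0"
  shows "AE \<omega> in M. \<not> (\<exists>r::nat. \<forall>K. \<exists>k\<ge>K. (\<Sum>j<k. Y j \<omega>) > real k / real (Suc r))"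
proof -
  define A where "A j = sigma_sets (space M) {Y j -` B \<inter> space M | B. B \<in> sets borel}" for j
  let ?T = "{\<omega>\<in>space M. \<exists>r::nat. \<forall>K. \<exists>k\<ge>K. (\<Sum>j<k. Y j \<omega>) > real k / real (Suc r)}"
  let ?E = "{\<omega>\<in>space M. \<exists>k. 0 < (\<Sum>j<k. Y j \<omega>)}"
  have Tm: "?T \<in> sets M" by measurable
  have sa: "sigma_algebra (space M) (A j)" for j
    unfolding A_def by (rule sigma_algebra_sigma_sets) auto
  have indA: "indep_sets A UNIV" using ind unfolding indep_vars_def A_def by auto
  have tail: "?T \<in> tail_events A"
    unfolding tail_events_def
  proof (rule InterI, clarify)
    fix n
    define Mn where "Mn = sigma (space M) (\<Union> (A ` {n..}))"
    have "A j \<subseteq> Pow (space M)" for j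
      unfolding A_def using sigma_sets_into_sp[of "{Y j -` B \<inter> space M | B. B \<in> sets borel}" "space M"] by auto
    then have gen: "\<Union> (A ` {n..}) \<subseteq> Pow (space M)" by auto
    have setsMn: "sets Mn = sigma_sets (space M) (\<Union> (A ` {n..}))"
      unfolding Mn_def using gen by (rule sets_measure_of)
    have spMn: "space Mn = space M" unfolding Mn_def using gen by (rule space_measure_of)
    have measZ[measurable]: "Y (n + j) \<in> borel_measurable Mn" for j
    proof (rule measurableI)
      fix x assume "x \<in> space Mn" show "Y (n + j) x \<in> space borel" by simp
    next
      fix B :: "real set" assume "B \<in> sets borel"
      then have "Y (n + j) -` B \<inter> space M \<in> A (n + j)" unfolding A_def by auto
      then show "Y (n + j) -` B \<inter> space Mn \<in> sets Mn" unfolding setsMn spMn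
        by (intro sigma_sets.Basic UN_I[of "n+j"]) auto
    qed
    let ?Tn = "{\<omega>\<in>space Mn. \<exists>r::nat. \<forall>K. \<exists>k\<ge>K. (\<Sum>j<k-n. Y (n+j) \<omega>) > real k / real (Suc r)}"
    have "?Tn \<in> sets Mn" by measurable
    moreover have "?T = ?Tn"
    proof (intro set_eqI iffI)
      fix \<omega> assume "\<omega> \<in> ?T"
      then have \<omega>: "\<omega> \<in> space M" and fr: "\<exists>r::nat. \<forall>K. \<exists>k\<ge>K. (\<Sum>j<k. Y j \<omega>) > real k / real (Suc r)" by auto
      have "\<exists>r::nat. \<forall>K. \<exists>k\<ge>K. (\<Sum>j<k-n. Y (n+j) \<omega>) > real k / real (Suc r)"
      proof (rule freq_shift[OF _ fr, where n=n and D="-(\<Sum>j<n. Y j \<omega>)"])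
        fix k assume "k \<ge> n" then obtain m where "k = n + m" by (metis le_add_diff_inverse)
        then show "(\<Sum>j<k-n. Y (n+j) \<omega>) = (\<Sum>j<k. Y j \<omega>) + -(\<Sum>j<n. Y j \<omega>)"
          by (simp add: sum_split_shift)
      qed
      then show "\<omega> \<in> ?Tn" using \<omega> spMn by auto
    next
      fix \<omega> assume "\<omega> \<in> ?Tn"
      then have \<omega>: "\<omega> \<in> space M" and fr: "\<exists>r::nat. \<forall>K. \<exists>k\<ge>K. (\<Sum>j<k-n. Y (n+j) \<omega>) > real k / real (Suc r)"
        using spMn by auto
      have "\<exists>r::nat. \<forall>K. \<exists>k\<ge>K. (\<Sum>j<k. Y j \<omega>) > real k / real (Suc r)"
      proof (rule freq_shift[OF _ fr, where n=n and D="(\<Sum>j<n. Y j \<omega>)"])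
        fix k assume "k \<ge> n" then obtain m where "k = n + m" by (metis le_add_diff_inverse)
        then show "(\<Sum>j<k. Y j \<omega>) = (\<Sum>j<k-n. Y (n+j) \<omega>) + (\<Sum>j<n. Y j \<omega>)"
          by (simp add: sum_split_shift)
      qed
      then show "\<omega> \<in> ?T" using \<omega> by auto
    qed
    ultimately show "?T \<in> sigma_sets (space M) (\<Union> (A ` {n..}))" unfolding setsMn by simp
  qed
  have "prob ?T = 0 \<or> prob ?T = 1"
    by (rule kolmogorov_0_1_law[OF sa indA tail])
  moreover have "prob ?T \<le> prob ?E"
  proof (rule finite_measure_mono)
    show "?T \<subseteq> ?E"
    proof clarify
      fix \<omega> r assume "\<omega> \<in> space M" and h: "\<forall>K. \<exists>k\<ge>K. (\<Sum>j<k. Y j \<omega>) > real k / real (Suc r)"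
      then obtain k where "(\<Sum>j<k. Y j \<omega>) > real k / real (Suc r)" by blast
      moreover have "real k / real (Suc r) \<ge> 0" by simp
      ultimately have "0 < (\<Sum>j<k. Y j \<omega>)" by linarith
      then show "\<exists>k. 0 < (\<Sum>j<k. Y j \<omega>)" by blast
    qed
  qed measurable
  moreover have "prob ?E < 1" by (rule neg_mean_escape[OF neg])
  ultimately have "prob ?T = 0" by linarith
  then have "AE \<omega> in M. \<omega> \<notin> ?T" using prob_eq_0[OF Tm] by simp
  from this AE_space show ?thesis by eventually_elim auto
qed

lemma upper_bound:
  assumes c: "c > expectation (Y 0)"
  shows "AE \<omega> in M. eventually (\<lambda>k. (\<Sum>j<k. Y j \<omega>) \<le> real k * c) sequentially"
proof -
  define \<eta> where "\<eta> = (c - expectation (Y 0)) / 2"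
  have eta: "\<eta> > 0" using c by (simp add: \<eta>_def)
  interpret Z: iid_seq M "\<lambda>j \<omega>. 1 * Y j \<omega> + (- (expectation (Y 0) + \<eta>))" by (rule iid_affine)
  have "expectation (\<lambda>\<omega>. 1 * Y 0 \<omega> + (- (expectation (Y 0) + \<eta>))) = - \<eta>"
    using int0 by (simp add: prob_space)
  then have "AE \<omega> in M. \<not> (\<exists>r::nat. \<forall>K. \<exists>k\<ge>K. (\<Sum>j<k. 1 * Y j \<omega> + (- (expectation (Y 0) + \<eta>))) > real k / real (Suc r))"
    using eta by (intro Z.tail_zero) simp
  then show ?thesis
  proof eventually_elim
    case (elim \<omega>)
    obtain r where r: "inverse (real (Suc r)) < \<eta>" using reals_Archimedean[OF eta] by auto
    from elim obtain K where K: "\<forall>k\<ge>K. (\<Sum>j<k. 1 * Y j \<omega> + (- (expectation (Y 0) + \<eta>))) \<le> real k / real (Suc r)"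
      by (meson not_le)
    show ?case
    proof (rule eventually_sequentiallyI[of K])
      fix k assume "K \<le> k"
      then have "(\<Sum>j<k. 1 * Y j \<omega> + (- (expectation (Y 0) + \<eta>))) \<le> real k / real (Suc r)" using K by auto
      then have "(\<Sum>j<k. Y j \<omega>) - real k * (expectation (Y 0) + \<eta>) \<le> real k * inverse (real (Suc r))"
        by (simp add: sum_subtractf divide_inverse algebra_simps)
      moreover have "real k * inverse (real (Suc r)) \<le> real k * \<eta>" using r by (intro mult_left_mono) auto
      ultimately have "(\<Sum>j<k. Y j \<omega>) \<le> real k * (expectation (Y 0) + \<eta>) + real k * \<eta>" by linarith
      moreover have "c = expectation (Y 0) + \<eta> + \<eta>" unfolding \<eta>_def by simp
      ultimately show "(\<Sum>j<k. Y j \<omega>) \<le> real k * c" by (simp add: algebra_simps)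
    qed
  qed
qed

theorem slln: "AE \<omega> in M. (\<lambda>m. (\<Sum>j<m. Y j \<omega>) / real m) \<longlonglongrightarrow> expectation (Y 0)"
proof -
  let ?\<mu> = "expectation (Y 0)"
  interpret N: iid_seq M "\<lambda>j \<omega>. (-1) * Y j \<omega> + 0" by (rule iid_affine)
  have eN: "expectation (\<lambda>\<omega>. (-1) * Y 0 \<omega> + 0) = - ?\<mu>" by simp
  have up: "AE \<omega> in M. \<forall>r::nat. eventually (\<lambda>k. (\<Sum>j<k. Y j \<omega>) \<le> real k * (?\<mu> + inverse (real (Suc r)))) sequentially"
    by (subst AE_all_countable, intro allI upper_bound) simp
  have lo: "AE \<omega> in M. \<forall>r::nat. eventually (\<lambda>k. (\<Sum>j<k. (-1) * Y j \<omega> + 0) \<le> real k * (- ?\<mu> + inverse (real (Suc r)))) sequentially"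
    by (subst AE_all_countable, intro allI N.upper_bound) (simp only: eN, simp)
  from up lo show ?thesis
  proof eventually_elim
    case (elim \<omega>)
    show ?case unfolding tendsto_iff
    proof (intro allI impI)
      fix e :: real assume e: "e > 0"
      obtain r where r: "inverse (real (Suc r)) < e" using reals_Archimedean[OF e] by auto
      have ev: "eventually (\<lambda>k. (\<Sum>j<k. Y j \<omega>) \<le> real k * (?\<mu> + inverse (real (Suc r)))
             \<and> (\<Sum>j<k. (-1) * Y j \<omega> + 0) \<le> real k * (- ?\<mu> + inverse (real (Suc r))) \<and> k \<ge> 1) sequentially"
        using elim by (intro eventually_conj eventually_ge_at_top) auto
      then show "eventually (\<lambda>k. dist ((\<Sum>j<k. Y j \<omega>) / real k) ?\<mu> < e) sequentially"
      proof eventually_elim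
        case (elim k)
        have kp: "real k > 0" using elim by simp
        have "(\<Sum>j<k. (-1) * Y j \<omega> + 0) = - (\<Sum>j<k. Y j \<omega>)" by (simp add: sum_negf)
        with elim have "\<bar>(\<Sum>j<k. Y j \<omega>) - real k * ?\<mu>\<bar> \<le> real k * inverse (real (Suc r))"
          by (simp add: algebra_simps abs_le_iff)
        then have "\<bar>(\<Sum>j<k. Y j \<omega>) / real k - ?\<mu>\<bar> \<le> inverse (real (Suc r))"
          using kp by (simp add: field_simps abs_divide del: of_nat_Suc)
        then show ?case using r by (simp add: dist_real_def)
      qed
    qed
  qed
qed

end


lemma matrix_inv_props:
  fixes A :: "real^'n^'n"
  assumes "invertible A"
  shows "A ** matrix_inv A = mat 1" "matrix_inv A ** A = mat 1"
proof -
  have "\<exists>A'. A ** A' = mat 1 \<and> A' ** A = mat 1" using assms unfolding invertible_def by auto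
  then have "A ** matrix_inv A = mat 1 \<and> matrix_inv A ** A = mat 1"
    unfolding matrix_inv_def by (rule someI_ex)
  then show "A ** matrix_inv A = mat 1" "matrix_inv A ** A = mat 1" by auto
qed

definition mnorm :: "real^'n^'m \<Rightarrow> real" where
  "mnorm A = (\<Sum>i\<in>UNIV. \<Sum>j\<in>UNIV. \<bar>A $ i $ j\<bar>)"

lemma mv_norm_bound: "norm (A *v x) \<le> mnorm A * norm x"
proof -
  have "norm (A *v x) \<le> onorm ((*v) A) * norm x"
    by (rule onorm[OF matrix_vector_mul_bounded_linear])
  also have "\<dots> \<le> mnorm A * norm x"
    unfolding mnorm_def by (intro mult_right_mono onorm_le_matrix_component_sum) auto
  finally show ?thesis .
qed

lemma mnorm_nonneg: "0 \<le> mnorm A" unfolding mnorm_def by (auto intro: sum_nonneg)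

lemma det_tendsto:
  fixes A :: "nat \<Rightarrow> real^'n^'n"
  assumes "\<And>i j. (\<lambda>m. A m $ i $ j) \<longlonglongrightarrow> A0 $ i $ j"
  shows "(\<lambda>m. det (A m)) \<longlonglongrightarrow> det A0"
  unfolding det_def by (intro tendsto_intros assms)

lemma mnorm_tendsto:
  fixes A :: "nat \<Rightarrow> real^'n^'m"
  assumes "\<And>i j. (\<lambda>m. A m $ i $ j) \<longlonglongrightarrow> A0 $ i $ j"
  shows "(\<lambda>m. mnorm (A m - A0)) \<longlonglongrightarrow> 0"
proof -
  have "(\<lambda>m. \<Sum>i\<in>UNIV. \<Sum>j\<in>UNIV. \<bar>A m $ i $ j - A0 $ i $ j\<bar>) \<longlonglongrightarrow> (\<Sum>i\<in>UNIV. \<Sum>j\<in>UNIV. \<bar>A0 $ i $ j - A0 $ i $ j\<bar>)"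
    by (intro tendsto_intros assms)
  then show ?thesis unfolding mnorm_def by simp
qed

lemma eventually_invertible:
  fixes A :: "nat \<Rightarrow> real^'n^'n"
  assumes "\<And>i j. (\<lambda>m. A m $ i $ j) \<longlonglongrightarrow> A0 $ i $ j" and "invertible A0"
  shows "eventually (\<lambda>m. invertible (A m)) sequentially"
proof -
  have "det A0 \<noteq> 0" using assms(2) invertible_det_nz by auto
  then have "eventually (\<lambda>m. det (A m) \<noteq> 0) sequentially"
    using det_tendsto[OF assms(1)] tendsto_imp_eventually_ne by blast
  then show ?thesis by eventually_elim (simp add: invertible_det_nz)
qed

lemma lin_solve_conv:
  fixes A :: "nat \<Rightarrow> real^'n^'n" and b x :: "nat \<Rightarrow> real^'n"
  assumes A: "\<And>i j. (\<lambda>m. A m $ i $ j) \<longlonglongrightarrow> A0 $ i $ j" and b: "b \<longlonglongrightarrow> b0"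
    and inv: "invertible A0"
    and eqn: "eventually (\<lambda>m. A m *v x m = b m) sequentially"
  shows "x \<longlonglongrightarrow> matrix_inv A0 *v b0"
proof -
  define Ai where "Ai = matrix_inv A0"
  define x0 where "x0 = Ai *v b0"
  define C where "C = mnorm Ai"
  define d where "d m = mnorm (A m - A0)" for m
  have C0: "C \<ge> 0" unfolding C_def by (rule mnorm_nonneg)
  have Ax0: "A0 *v x0 = b0" unfolding x0_def Ai_def
    by (simp add: matrix_vector_mul_assoc matrix_inv_props(1)[OF inv])
  have d0: "d \<longlonglongrightarrow> 0" unfolding d_def by (rule mnorm_tendsto[OF A])
  have "(\<lambda>m. C * d m) \<longlonglongrightarrow> C * 0" by (intro tendsto_intros d0)
  then have "eventually (\<lambda>m. C * d m < 1/2) sequentially"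
    by (intro order_tendstoD) auto
  have bnd: "eventually (\<lambda>m. norm (x m - x0) \<le> 2 * C * (norm (b m - b0) + d m * norm x0)) sequentially"
    using eqn \<open>eventually (\<lambda>m. C * d m < 1/2) sequentially\<close>
  proof eventually_elim
    case (elim m)
    have dm0: "d m \<ge> 0" unfolding d_def by (rule mnorm_nonneg)
    have "x m - x0 = Ai *v (A0 *v (x m - x0))"
      unfolding Ai_def by (simp add: matrix_vector_mul_assoc matrix_inv_props(2)[OF inv])
    also have "A0 *v (x m - x0) = (b m - b0) - (A m - A0) *v x m"
      using elim(1) Ax0 by (simp add: algebra_simps)
    finally have "norm (x m - x0) \<le> C * norm ((b m - b0) - (A m - A0) *v x m)"
      unfolding C_def by (metis mv_norm_bound)
    also have "norm ((b m - b0) - (A m - A0) *v x m) \<le> norm (b m - b0) + d m * norm (x m)"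
      unfolding d_def using mv_norm_bound[of "A m - A0" "x m"] norm_triangle_ineq4[of "b m - b0" "(A m - A0) *v x m"]
      by linarith
    also have "norm (x m) \<le> norm x0 + norm (x m - x0)"
      using norm_triangle_ineq[of x0 "x m - x0"] by simp
    finally have "norm (x m - x0) \<le> C * (norm (b m - b0) + d m * (norm x0 + norm (x m - x0)))"
      using C0 dm0 by (simp add: mult_left_mono)
    then have "norm (x m - x0) \<le> C * (norm (b m - b0) + d m * norm x0) + (C * d m) * norm (x m - x0)"
      by (simp add: algebra_simps)
    moreover have "(C * d m) * norm (x m - x0) \<le> 1/2 * norm (x m - x0)"
      using elim(2) by (intro mult_right_mono) auto
    ultimately show ?case by (simp add: algebra_simps)
  qed
  have lim0: "(\<lambda>m. 2 * C * (norm (b m - b0) + d m * norm x0)) \<longlonglongrightarrow> 2 * C * (norm (b0 - b0) + 0 * norm x0)"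
    by (intro tendsto_intros b d0)
  have "(\<lambda>m. x m - x0) \<longlonglongrightarrow> 0"
    by (rule Lim_null_comparison[OF bnd]) (use lim0 in simp)
  then have "x \<longlonglongrightarrow> x0" by (simp add: LIM_zero_iff)
  then show ?thesis unfolding x0_def Ai_def .
qed



lemma contval_lip:
  fixes \<phi> :: "'k::finite \<Rightarrow> 'x \<Rightarrow> nat \<Rightarrow> real"
  assumes Bd: "\<And>k x n. \<bar>\<phi> k x n\<bar> \<le> B"
  shows "\<bar>contval N g \<phi> \<theta> n x - contval N g \<phi> \<theta>' n x\<bar> \<le> B * (\<Sum>k\<in>UNIV. \<bar>\<theta> $ k - \<theta>' $ k\<bar>)"
proof -
  have B0: "0 \<le> B" using Bd[of undefined undefined undefined] by linarith
  have "\<bar>Phi \<phi> \<theta> n x - Phi \<phi> \<theta>' n x\<bar> = \<bar>\<Sum>k\<in>UNIV. (\<theta> $ k - \<theta>' $ k) * \<phi> k x n\<bar>"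
    unfolding Phi_def by (simp add: sum_subtractf left_diff_distrib)
  also have "\<dots> \<le> (\<Sum>k\<in>UNIV. \<bar>(\<theta> $ k - \<theta>' $ k) * \<phi> k x n\<bar>)" by (rule sum_abs)
  also have "\<dots> \<le> (\<Sum>k\<in>UNIV. \<bar>\<theta> $ k - \<theta>' $ k\<bar> * B)"
    by (intro sum_mono) (auto simp: abs_mult intro: mult_left_mono Bd)
  finally have P: "\<bar>Phi \<phi> \<theta> n x - Phi \<phi> \<theta>' n x\<bar> \<le> B * (\<Sum>k\<in>UNIV. \<bar>\<theta> $ k - \<theta>' $ k\<bar>)"
    by (simp add: sum_distrib_left mult.commute)
  have S0: "0 \<le> B * (\<Sum>k\<in>UNIV. \<bar>\<theta> $ k - \<theta>' $ k\<bar>)" using B0 by (auto intro: sum_nonneg)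
  show ?thesis
  proof (cases "n = N")
    case True then show ?thesis using S0 by (simp add: contval_def)
  next
    case False
    have "\<bar>max (g x) (Phi \<phi> \<theta> n x) - max (g x) (Phi \<phi> \<theta>' n x)\<bar> \<le> \<bar>Phi \<phi> \<theta> n x - Phi \<phi> \<theta>' n x\<bar>"
      by (simp add: max_def abs_if)
    then show ?thesis using False P by (simp add: contval_def)
  qed
qed

lemma emp_target_lip:
  fixes \<phi> :: "'k::finite \<Rightarrow> 'x \<Rightarrow> nat \<Rightarrow> real"
  assumes Bd: "\<And>k x n. \<bar>\<phi> k x n\<bar> \<le> B"
  shows "\<bar>emp_target xs m N g \<phi> \<theta> $ i - emp_target xs m N g \<phi> \<theta>' $ i\<bar>
         \<le> real m * (real N * (B * (B * (\<Sum>k\<in>UNIV. \<bar>\<theta> $ k - \<theta>' $ k\<bar>))))"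
proof -
  let ?S = "B * (\<Sum>k\<in>UNIV. \<bar>\<theta> $ k - \<theta>' $ k\<bar>)"
  have B0: "0 \<le> B" using Bd[of undefined undefined undefined] by linarith
  have "\<bar>emp_target xs m N g \<phi> \<theta> $ i - emp_target xs m N g \<phi> \<theta>' $ i\<bar>
      = \<bar>\<Sum>l<m. \<Sum>n<N. \<phi> i (xs l n) n * (contval N g \<phi> \<theta> (Suc n) (xs l (Suc n)) - contval N g \<phi> \<theta>' (Suc n) (xs l (Suc n)))\<bar>"
    unfolding emp_target_def by (simp add: sum_subtractf right_diff_distrib)
  also have "\<dots> \<le> (\<Sum>l<m. \<bar>\<Sum>n<N. \<phi> i (xs l n) n * (contval N g \<phi> \<theta> (Suc n) (xs l (Suc n)) - contval N g \<phi> \<theta>' (Suc n) (xs l (Suc n)))\<bar>)"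
    by (rule sum_abs)
  also have "\<dots> \<le> (\<Sum>l<m. \<Sum>n<N. B * ?S)"
  proof (intro sum_mono)
    fix l
    have "\<bar>\<Sum>n<N. \<phi> i (xs l n) n * (contval N g \<phi> \<theta> (Suc n) (xs l (Suc n)) - contval N g \<phi> \<theta>' (Suc n) (xs l (Suc n)))\<bar>
      \<le> (\<Sum>n<N. \<bar>\<phi> i (xs l n) n * (contval N g \<phi> \<theta> (Suc n) (xs l (Suc n)) - contval N g \<phi> \<theta>' (Suc n) (xs l (Suc n)))\<bar>)"
      by (rule sum_abs)
    also have "\<dots> \<le> (\<Sum>n<N. B * ?S)"
      unfolding abs_mult by (intro sum_mono mult_mono Bd contval_lip[OF Bd]) (auto simp: B0)
    finally show "\<bar>\<Sum>n<N. \<phi> i (xs l n) n * (contval N g \<phi> \<theta> (Suc n) (xs l (Suc n)) - contval N g \<phi> \<theta>' (Suc n) (xs l (Suc n)))\<bar>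
      \<le> (\<Sum>n<N. B * ?S)" .
  qed
  also have "\<dots> = real m * (real N * (B * ?S))" by simp
  finally show ?thesis .
qed

lemma step_det:
  fixes xs :: "nat \<Rightarrow> nat \<Rightarrow> 'x" and \<phi> :: "'k::finite \<Rightarrow> 'x \<Rightarrow> nat \<Rightarrow> real"
  assumes Bd: "\<And>k x n. \<bar>\<phi> k x n\<bar> \<le> B"
    and G: "\<And>i j. (\<lambda>m. emp_gram xs m N \<phi> $ i $ j / real m) \<longlonglongrightarrow> G0 $ i $ j"
    and T: "\<And>i. (\<lambda>m. emp_target xs m N g \<phi> \<theta> $ i / real m) \<longlonglongrightarrow> T0 $ i"
    and th: "\<theta>h \<longlonglongrightarrow> \<theta>"
    and inv: "invertible G0"
  shows "(\<lambda>m. \<alpha> *\<^sub>R (matrix_inv (emp_gram xs m N \<phi>) *v emp_target xs m N g \<phi> (\<theta>h m)))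
           \<longlonglongrightarrow> \<alpha> *\<^sub>R (matrix_inv G0 *v T0)"
proof -
  define A where "A m = (1 / real m) *\<^sub>R emp_gram xs m N \<phi>" for m
  define b where "b m = (\<alpha> / real m) *\<^sub>R emp_target xs m N g \<phi> (\<theta>h m)" for m
  define x where "x m = \<alpha> *\<^sub>R (matrix_inv (emp_gram xs m N \<phi>) *v emp_target xs m N g \<phi> (\<theta>h m))" for m
  have A: "(\<lambda>m. A m $ i $ j) \<longlonglongrightarrow> G0 $ i $ j" for i j
    using G[of i j] unfolding A_def by simp
  have Tt: "(\<lambda>m. emp_target xs m N g \<phi> (\<theta>h m) $ i / real m) \<longlonglongrightarrow> T0 $ i" for i
  proof -
    define S where "S m = (\<Sum>k\<in>UNIV. \<bar>\<theta>h m $ k - \<theta> $ k\<bar>)" for m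
    have S: "S \<longlonglongrightarrow> (\<Sum>k\<in>UNIV. \<bar>\<theta> $ k - \<theta> $ k\<bar>)"
      unfolding S_def by (intro tendsto_intros th)
    have "(\<lambda>m. (emp_target xs m N g \<phi> (\<theta>h m) $ i - emp_target xs m N g \<phi> \<theta> $ i) / real m) \<longlonglongrightarrow> 0"
    proof (rule Lim_null_comparison)
      show "eventually (\<lambda>m. norm ((emp_target xs m N g \<phi> (\<theta>h m) $ i - emp_target xs m N g \<phi> \<theta> $ i) / real m)
              \<le> real N * (B * (B * S m))) sequentially"
        using eventually_ge_at_top[of 1]
      proof eventually_elim
        case (elim m)
        then have mp: "real m > 0" by simp
        have "\<bar>emp_target xs m N g \<phi> (\<theta>h m) $ i - emp_target xs m N g \<phi> \<theta> $ i\<bar> \<le> real m * (real N * (B * (B * S m)))"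
          unfolding S_def by (rule emp_target_lip[OF Bd])
        then show ?case using mp by (simp add: abs_divide field_simps)
      qed
      show "(\<lambda>m. real N * (B * (B * S m))) \<longlonglongrightarrow> 0"
        using tendsto_mult_right[OF tendsto_mult_right[OF tendsto_mult_right[OF S]], of B B "real N"]
        by (simp add: mult.commute mult.left_commute)
    qed
    from tendsto_add[OF this T[of i]] show ?thesis by (simp add: diff_divide_distrib)
  qed
  have b: "b \<longlonglongrightarrow> \<alpha> *\<^sub>R T0"
  proof (rule vec_tendstoI)
    fix i
    have "(\<lambda>m. \<alpha> * (emp_target xs m N g \<phi> (\<theta>h m) $ i / real m)) \<longlonglongrightarrow> \<alpha> * T0 $ i"
      by (intro tendsto_intros Tt)
    then show "(\<lambda>m. b m $ i) \<longlonglongrightarrow> (\<alpha> *\<^sub>R T0) $ i" unfolding b_def by simp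
  qed
  have eqn: "eventually (\<lambda>m. A m *v x m = b m) sequentially"
    using eventually_invertible[OF A inv] eventually_ge_at_top[of 1]
  proof eventually_elim
    case (elim m)
    have mp: "real m \<noteq> 0" using elim by simp
    have Gm: "emp_gram xs m N \<phi> = real m *\<^sub>R A m" unfolding A_def using mp by simp
    have invG: "invertible (emp_gram xs m N \<phi>)" unfolding Gm using elim mp by (simp add: scalar_invertible)
    have "emp_gram xs m N \<phi> *v x m = \<alpha> *\<^sub>R ((emp_gram xs m N \<phi> ** matrix_inv (emp_gram xs m N \<phi>)) *v emp_target xs m N g \<phi> (\<theta>h m))"
      unfolding x_def by (simp add: matrix_vector_mult_scaleR matrix_vector_mul_assoc)
    also have "\<dots> = \<alpha> *\<^sub>R emp_target xs m N g \<phi> (\<theta>h m)" using matrix_inv_props(1)[OF invG] by simp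
    finally have "A m *v x m = (1 / real m) *\<^sub>R (\<alpha> *\<^sub>R emp_target xs m N g \<phi> (\<theta>h m))"
      unfolding A_def by (simp add: scaleR_matrix_vector_assoc[symmetric])
    also have "\<dots> = b m" unfolding b_def by simp
    finally show ?case .
  qed
  have "x \<longlonglongrightarrow> matrix_inv G0 *v (\<alpha> *\<^sub>R T0)" by (rule lin_solve_conv[OF A b inv eqn])
  then show ?thesis unfolding x_def by (simp add: matrix_vector_mult_scaleR)
qed



lemma slln_app:
  fixes M :: "'w measure" and X :: "'w \<Rightarrow> nat \<Rightarrow> real^'d" and xs :: "nat \<Rightarrow> 'w \<Rightarrow> nat \<Rightarrow> real^'d"
    and F :: "(nat \<Rightarrow> real^'d) \<Rightarrow> real"
  assumes P: "prob_space M"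
    and X_meas: "\<forall>n\<le>N. (\<lambda>\<omega>. X \<omega> n) \<in> borel_measurable M"
    and xs_meas: "\<forall>j. \<forall>n\<le>N. (\<lambda>\<omega>. xs j \<omega> n) \<in> borel_measurable M"
    and ind: "prob_space.indep_vars M (\<lambda>_. PiM {..N} (\<lambda>_. borel))
           (\<lambda>j \<omega>. restrict (xs j \<omega>) {..N}) UNIV"
    and dist: "\<forall>j. distr M (PiM {..N} (\<lambda>_. borel)) (\<lambda>\<omega>. restrict (xs j \<omega>) {..N})
             = distr M (PiM {..N} (\<lambda>_. borel)) (\<lambda>\<omega>. restrict (X \<omega>) {..N})"
    and F: "F \<in> borel_measurable (PiM {..N} (\<lambda>_. borel))"
    and intF: "integrable M (\<lambda>\<omega>. F (restrict (X \<omega>) {..N}))"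
  shows "AE \<omega> in M. (\<lambda>m. (\<Sum>l<m. F (restrict (xs l \<omega>) {..N})) / real m)
            \<longlonglongrightarrow> integral\<^sup>L M (\<lambda>\<omega>. F (restrict (X \<omega>) {..N}))"
proof -
  interpret prob_space M by (rule P)
  let ?P = "PiM {..N} (\<lambda>_. borel :: (real^'d) measure)"
  have Zm: "(\<lambda>\<omega>. restrict (xs j \<omega>) {..N}) \<in> measurable M ?P" for j
    using xs_meas by (intro measurable_restrict) auto
  have ZXm: "(\<lambda>\<omega>. restrict (X \<omega>) {..N}) \<in> measurable M ?P"
    using X_meas by (intro measurable_restrict) auto
  have dd: "distr M borel (\<lambda>\<omega>. F (restrict (xs j \<omega>) {..N})) = distr M borel (\<lambda>\<omega>. F (restrict (X \<omega>) {..N}))" for j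
  proof -
    have "distr M borel (\<lambda>\<omega>. F (restrict (xs j \<omega>) {..N})) = distr (distr M ?P (\<lambda>\<omega>. restrict (xs j \<omega>) {..N})) borel F"
      using Zm F by (subst distr_distr) (auto simp: comp_def)
    also have "\<dots> = distr (distr M ?P (\<lambda>\<omega>. restrict (X \<omega>) {..N})) borel F" using dist by simp
    also have "\<dots> = distr M borel (\<lambda>\<omega>. F (restrict (X \<omega>) {..N}))"
      using ZXm F by (subst distr_distr) (auto simp: comp_def)
    finally show ?thesis .
  qed
  have int0: "integrable M (\<lambda>\<omega>. F (restrict (xs 0 \<omega>) {..N}))"
  proof -
    have "integrable (distr M ?P (\<lambda>\<omega>. restrict (X \<omega>) {..N})) F"
      using intF by (subst integrable_distr_eq[OF ZXm F])
    then have "integrable (distr M ?P (\<lambda>\<omega>. restrict (xs 0 \<omega>) {..N})) F" using dist by simp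
    then show ?thesis by (subst (asm) integrable_distr_eq[OF Zm F])
  qed
  have exp0: "integral\<^sup>L M (\<lambda>\<omega>. F (restrict (xs 0 \<omega>) {..N})) = integral\<^sup>L M (\<lambda>\<omega>. F (restrict (X \<omega>) {..N}))"
  proof -
    have "integral\<^sup>L M (\<lambda>\<omega>. F (restrict (xs 0 \<omega>) {..N})) = integral\<^sup>L (distr M ?P (\<lambda>\<omega>. restrict (xs 0 \<omega>) {..N})) F"
      by (rule integral_distr[OF Zm F, symmetric])
    also have "\<dots> = integral\<^sup>L (distr M ?P (\<lambda>\<omega>. restrict (X \<omega>) {..N})) F" using dist by simp
    also have "\<dots> = integral\<^sup>L M (\<lambda>\<omega>. F (restrict (X \<omega>) {..N}))" by (rule integral_distr[OF ZXm F])
    finally show ?thesis .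
  qed
  interpret Y: iid_seq M "\<lambda>l \<omega>. F (restrict (xs l \<omega>) {..N})"
  proof
    show "indep_vars (\<lambda>_. borel) (\<lambda>l \<omega>. F (restrict (xs l \<omega>) {..N})) UNIV"
      by (rule indep_vars_compose2[OF ind, where Y="\<lambda>_. F"]) (use F in auto)
    show "distr M borel (\<lambda>\<omega>. F (restrict (xs j \<omega>) {..N})) = distr M borel (\<lambda>\<omega>. F (restrict (xs 0 \<omega>) {..N}))" for j
      using dd[of j] dd[of 0] by simp
    show "integrable M (\<lambda>\<omega>. F (restrict (xs 0 \<omega>) {..N}))" by (rule int0)
  qed
  show ?thesis using Y.slln unfolding exp0 .
qed



lemma rbf_meas:
  assumes "\<sigma> \<in> borel_measurable borel"
  shows "(\<lambda>x. rbf \<sigma> a c b k x n) \<in> borel_measurable borel"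
  unfolding rbf_def using assms by measurable

lemma contval_meas:
  assumes "\<And>k. (\<lambda>x. \<phi> k x n) \<in> borel_measurable borel" "g \<in> borel_measurable borel"
  shows "(\<lambda>x. contval N g (\<phi> :: 'k::finite \<Rightarrow> 'x::topological_space \<Rightarrow> nat \<Rightarrow> real) \<theta> n x) \<in> borel_measurable borel"
  unfolding contval_def Phi_def using assms by measurable

lemma contval_bound:
  fixes \<phi> :: "'k::finite \<Rightarrow> 'x \<Rightarrow> nat \<Rightarrow> real"
  assumes Bd: "\<And>k x n. \<bar>\<phi> k x n\<bar> \<le> B" and g0: "g x \<ge> 0"
  shows "\<bar>contval N g \<phi> \<theta> n x\<bar> \<le> g x + B * (\<Sum>k\<in>UNIV. \<bar>\<theta> $ k\<bar>)"
proof -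
  have B0: "0 \<le> B" using Bd[of undefined undefined undefined] by linarith
  have "\<bar>Phi \<phi> \<theta> n x\<bar> \<le> (\<Sum>k\<in>UNIV. \<bar>\<theta> $ k * \<phi> k x n\<bar>)" unfolding Phi_def by (rule sum_abs)
  also have "\<dots> \<le> (\<Sum>k\<in>UNIV. \<bar>\<theta> $ k\<bar> * B)"
    by (intro sum_mono) (auto simp: abs_mult intro: mult_left_mono Bd)
  finally have P: "\<bar>Phi \<phi> \<theta> n x\<bar> \<le> B * (\<Sum>k\<in>UNIV. \<bar>\<theta> $ k\<bar>)" by (simp add: sum_distrib_left mult.commute)
  have S0: "0 \<le> B * (\<Sum>k\<in>UNIV. \<bar>\<theta> $ k\<bar>)" using B0 by (auto intro: sum_nonneg)
  show ?thesis using P S0 g0 by (auto simp: contval_def max_def)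
qed

theorem lemma9:
  fixes M :: "'w measure"
    and X :: "'w \<Rightarrow> nat \<Rightarrow> real^'d"
    and xs :: "nat \<Rightarrow> 'w \<Rightarrow> nat \<Rightarrow> real^'d"
    and \<sigma> :: "real \<Rightarrow> real"
    and a :: "'k::finite \<Rightarrow> real^'d" and c :: "'k \<Rightarrow> real" and b :: "'k \<Rightarrow> real"
    and g :: "real^'d \<Rightarrow> real"
    and \<alpha> :: real and \<theta>0 :: "real^'k" and N i :: nat
  assumes P: "prob_space M"
    and "N \<ge> 1"
    and X_meas: "\<forall>n\<le>N. (\<lambda>\<omega>. X \<omega> n) \<in> borel_measurable M"
    and "markov_process M X N"
    and sig: "\<sigma> \<in> borel_measurable borel" and bnd: "bounded (range \<sigma>)"
    and gm: "g \<in> borel_measurable borel" and g0: "\<forall>x. g x \<ge> 0"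
    and gint: "\<forall>n\<le>N. integrable M (\<lambda>\<omega>. g (X \<omega> n))"
    and "0 < \<alpha>" and "\<alpha> < 1"
    and inv: "invertible (gram M X N (rbf \<sigma> a c b))"
    and xs_meas: "\<forall>j. \<forall>n\<le>N. (\<lambda>\<omega>. xs j \<omega> n) \<in> borel_measurable M"
    and ind: "prob_space.indep_vars M (\<lambda>_. PiM {..N} (\<lambda>_. borel))
           (\<lambda>j \<omega>. restrict (xs j \<omega>) {..N}) UNIV"
    and dist: "\<forall>j. distr M (PiM {..N} (\<lambda>_. borel)) (\<lambda>\<omega>. restrict (xs j \<omega>) {..N})
             = distr M (PiM {..N} (\<lambda>_. borel)) (\<lambda>\<omega>. restrict (X \<omega>) {..N})"
  shows "AE \<omega> in M. (\<lambda>m. theta_hat (\<lambda>j. xs j \<omega>) m N g (rbf \<sigma> a c b) \<alpha> \<theta>0 i)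
                      \<longlonglongrightarrow> theta M X N g (rbf \<sigma> a c b) \<alpha> \<theta>0 i"
proof -
  interpret prob_space M by (rule P)
  let ?\<phi> = "rbf \<sigma> a c b"
  let ?P = "PiM {..N} (\<lambda>_. borel :: (real^'d) measure)"
  obtain B where B: "\<And>x. \<bar>\<sigma> x\<bar> \<le> B" using bnd unfolding bounded_real by auto
  have Bd: "\<And>k x n. \<bar>?\<phi> k x n\<bar> \<le> B" unfolding rbf_def using B by auto
  have B0: "0 \<le> B" using B[of 0] by linarith
  have phim: "(\<lambda>x. ?\<phi> k x n) \<in> borel_measurable borel" for k n by (rule rbf_meas[OF sig])
  have compm: "(\<lambda>h. f (h n)) \<in> borel_measurable ?P" if "f \<in> borel_measurable borel" "n \<le> N" for f :: "real^'d \<Rightarrow> real" and n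
  proof -
    have "n \<in> {..N}" using that(2) by simp
    from measurable_compose[OF measurable_component_singleton[OF this] that(1)]
    show ?thesis by simp
  qed
  define FG where "FG i j h = (\<Sum>n<N. ?\<phi> i (h n) n * ?\<phi> j (h n) n)" for i j and h :: "nat \<Rightarrow> real^'d"
  define FT where "FT \<theta> i h = (\<Sum>n<N. ?\<phi> i (h n) n * contval N g ?\<phi> \<theta> (Suc n) (h (Suc n)))"
    for \<theta> i and h :: "nat \<Rightarrow> real^'d"
  have FGm: "FG i j \<in> borel_measurable ?P" for i j
    unfolding FG_def by (intro borel_measurable_sum borel_measurable_times compm phim) auto
  have FTm: "FT \<theta> i \<in> borel_measurable ?P" for \<theta> i
    unfolding FT_def by (intro borel_measurable_sum borel_measurable_times compm phim contval_meas gm) auto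
  have FGr: "FG i j (restrict z {..N}) = (\<Sum>n<N. ?\<phi> i (z n) n * ?\<phi> j (z n) n)" for i j z
    unfolding FG_def by (intro sum.cong) auto
  have FTr: "FT \<theta> i (restrict z {..N}) = (\<Sum>n<N. ?\<phi> i (z n) n * contval N g ?\<phi> \<theta> (Suc n) (z (Suc n)))" for \<theta> i z
    unfolding FT_def by (intro sum.cong) auto
  have Xm: "(\<lambda>\<omega>. X \<omega> n) \<in> borel_measurable M" if "n \<le> N" for n using X_meas that by auto
  have ZXm: "(\<lambda>\<omega>. restrict (X \<omega>) {..N}) \<in> measurable M ?P"
    using X_meas by (intro measurable_restrict) auto
  have intG: "integrable M (\<lambda>\<omega>. FG i j (restrict (X \<omega>) {..N}))" for i j
  proof (rule integrable_const_bound[where B="real N * (B * B)"])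
    show "AE \<omega> in M. norm (FG i j (restrict (X \<omega>) {..N})) \<le> real N * (B * B)"
    proof (rule AE_I2)
      fix \<omega>
      have "\<bar>FG i j (restrict (X \<omega>) {..N})\<bar> \<le> (\<Sum>n<N. \<bar>?\<phi> i (X \<omega> n) n * ?\<phi> j (X \<omega> n) n\<bar>)"
        unfolding FGr by (rule sum_abs)
      also have "\<dots> \<le> (\<Sum>n<N. B * B)" unfolding abs_mult by (intro sum_mono mult_mono Bd) (auto simp: B0)
      finally show "norm (FG i j (restrict (X \<omega>) {..N})) \<le> real N * (B * B)" by simp
    qed
    show "(\<lambda>\<omega>. FG i j (restrict (X \<omega>) {..N})) \<in> borel_measurable M"
      by (rule measurable_compose[OF ZXm FGm])
  qed
  have intT: "integrable M (\<lambda>\<omega>. FT \<theta> i (restrict (X \<omega>) {..N}))" for \<theta> i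
  proof (rule Bochner_Integration.integrable_bound)
    let ?w = "\<lambda>\<omega>. \<Sum>n<N. B * (g (X \<omega> (Suc n)) + B * (\<Sum>k\<in>UNIV. \<bar>\<theta> $ k\<bar>))"
    show "integrable M ?w"
    proof (rule Bochner_Integration.integrable_sum)
      fix n assume "n \<in> {..<N}"
      then have "integrable M (\<lambda>\<omega>. g (X \<omega> (Suc n)))" using gint by auto
      then show "integrable M (\<lambda>\<omega>. B * (g (X \<omega> (Suc n)) + B * (\<Sum>k\<in>UNIV. \<bar>\<theta> $ k\<bar>)))" by auto
    qed
    show "(\<lambda>\<omega>. FT \<theta> i (restrict (X \<omega>) {..N})) \<in> borel_measurable M"
      by (rule measurable_compose[OF ZXm FTm])
    show "AE \<omega> in M. norm (FT \<theta> i (restrict (X \<omega>) {..N})) \<le> norm (?w \<omega>)"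
    proof (rule AE_I2)
      fix \<omega>
      have "\<bar>FT \<theta> i (restrict (X \<omega>) {..N})\<bar> \<le> (\<Sum>n<N. \<bar>?\<phi> i (X \<omega> n) n * contval N g ?\<phi> \<theta> (Suc n) (X \<omega> (Suc n))\<bar>)"
        unfolding FTr by (rule sum_abs)
      also have "\<dots> \<le> ?w \<omega>" unfolding abs_mult
        by (intro sum_mono mult_mono Bd contval_bound[OF Bd]) (auto simp: B0 g0)
      also have "\<dots> \<le> norm (?w \<omega>)" by simp
      finally show "norm (FT \<theta> i (restrict (X \<omega>) {..N})) \<le> norm (?w \<omega>)" by simp
    qed
  qed
  have slln: "AE \<omega> in M. (\<lambda>m. (\<Sum>l<m. F (restrict (xs l \<omega>) {..N})) / real m)
            \<longlonglongrightarrow> integral\<^sup>L M (\<lambda>\<omega>. F (restrict (X \<omega>) {..N}))"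
    if "F \<in> borel_measurable ?P" "integrable M (\<lambda>\<omega>. F (restrict (X \<omega>) {..N}))" for F
    by (rule slln_app[OF P X_meas xs_meas ind dist that])
  have gramE: "gram M X N ?\<phi> $ i $ j = integral\<^sup>L M (\<lambda>\<omega>. FG i j (restrict (X \<omega>) {..N}))" for i j
    unfolding gram_def FGr by simp
  have targetE: "target M X N g ?\<phi> \<theta> $ i = integral\<^sup>L M (\<lambda>\<omega>. FT \<theta> i (restrict (X \<omega>) {..N}))" for \<theta> i
    unfolding target_def FTr by simp
  have egE: "emp_gram (\<lambda>j. xs j \<omega>) m N ?\<phi> $ i $ j = (\<Sum>l<m. FG i j (restrict (xs l \<omega>) {..N}))" for \<omega> m i j
    unfolding emp_gram_def FGr by simp
  have etE: "emp_target (\<lambda>j. xs j \<omega>) m N g ?\<phi> \<theta> $ i = (\<Sum>l<m. FT \<theta> i (restrict (xs l \<omega>) {..N}))" for \<omega> m \<theta> i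
    unfolding emp_target_def FTr by simp
  have AEG: "AE \<omega> in M. \<forall>i\<in>UNIV. \<forall>j\<in>UNIV. (\<lambda>m. emp_gram (\<lambda>j. xs j \<omega>) m N ?\<phi> $ i $ j / real m)
                 \<longlonglongrightarrow> gram M X N ?\<phi> $ i $ j"
    unfolding egE gramE by (intro AE_finite_allI slln FGm intG) auto
  have AET: "AE \<omega> in M. \<forall>i\<in>UNIV. (\<lambda>m. emp_target (\<lambda>j. xs j \<omega>) m N g ?\<phi> \<theta> $ i / real m)
                 \<longlonglongrightarrow> target M X N g ?\<phi> \<theta> $ i" for \<theta>
    unfolding etE targetE by (intro AE_finite_allI slln FTm intT) auto
  have main: "AE \<omega> in M. (\<lambda>m. theta_hat (\<lambda>j. xs j \<omega>) m N g ?\<phi> \<alpha> \<theta>0 i')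
                      \<longlonglongrightarrow> theta M X N g ?\<phi> \<alpha> \<theta>0 i'" for i'
  proof (induction i')
    case 0 then show ?case by simp
  next
    case (Suc i')
    from Suc AEG AET[of "theta M X N g ?\<phi> \<alpha> \<theta>0 i'"] show ?case
    proof eventually_elim
      case (elim \<omega>)
      show ?case unfolding theta_hat.simps theta.simps
        by (rule step_det[OF Bd]) (use elim inv in auto)
    qed
  qed
  show ?thesis by (rule main)
qed


end
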